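(* Let $d\ge2$, $(k,\sigma)\in\Xi^d$, and let $T$ be a compact operator on $\ell^2(\mathbb{Z}^d)$. Let $(k_n,\sigma_n)_{n\in\mathbb{N}}$ be a sequence in $\Xi^d$ converging to $(k,\sigma)$. If $f\in\ell^1(\mathbb{Z}^d)$, then $\big(\pi_{k_n,\sigma_n}(\upsilon_{k_n}(f))T\big)_{n\in\mathbb{N}}$ converges in operator norm to $\pi_{k,\sigma}(\upsilon_k(f))T$.
   Context: $\mathbb{N}_\ast=\{2,3,\ldots\}$, $\overline{\mathbb{N}}_\ast=\mathbb{N}_\ast\cup\{\infty\}$. For $k\in\overline{\mathbb{N}}_\ast^d$: $k\mathbb{Z}^d=\prod_jk_j\mathbb{Z}$ with $\infty\mathbb{Z}=\{0\}$, $\mathbb{Z}^d_k=\mathbb{Z}^d/k\mathbb{Z}^d$, $q_k$ the canonical surjection. A skew-bicharacter of $\mathbb{Z}^d_k$ is a bicharacter $\sigma$ into the unit circle with $\sigma(n,m)=\overline{\sigma(m,n)}$, identified with its lift to $\mathbb{Z}^d$. $\Xi^d$ is the set of pairs $(k,\sigma)$ with $\sigma$ a skew-bicharacter of $\mathbb{Z}^d_k$, topologized as a subspace of $\overline{\mathbb{N}}_\ast^d\times\{\text{skew-bicharacters of }\mathbb{Z}^d\}$ (product topology, pointwise convergence in the second factor). On $\ell^2(\mathbb{Z}^d_k)$ let $U^n_{k,\sigma}e_m=\sigma(m,n)e_{m-n}$, $\rho_{k,\sigma}(g)=\sum_ng(n)U^n_{k,\sigma}$, $C^\ast(\mathbb{Z}^d_k,\sigma)$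 the norm closure. $I_k=\prod_j\{\lfloor\frac{1-k_j}{2}\rfloor,\ldots,\lfloor\frac{k_j-1}{2}\rfloor\}$ (factor $\mathbb{Z}$ if $k_j=\infty$). $\pi_{k,\sigma}$ is the representation of $C^\ast(\mathbb{Z}^d_k,\sigma)$ on $\ell^2(\mathbb{Z}^d)$ which, for each $n\in k\mathbb{Z}^d$, leaves $H_n=\overline{\mathrm{span}}\{e_j:j\in I_k+n\}$ invariant and acts there as $W_n\rho_{k,\sigma}(\cdot)W_n^\ast$, with $W_n e_{q_k(j)}=e_{j+n}$ for $j\in I_k$. $\upsilon_k:\ell^1(\mathbb{Z}^d)\to\ell^1(\mathbb{Z}^d_k)$, $\upsilon_k(f)(q_k(n))=\sum_{m\in k\mathbb{Z}^d}f(m+n)$. *)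

theory Defs
  imports "HOL-Analysis.Analysis" "HOL-Library.Extended_Nat"
begin

text \<open>Points of Z^d are vectors int^'d (d = CARD('d)); k in (N_* u {oo})^d is enat^'d.
  Functions on Z^d_k are represented as k-periodic functions on Z^d (lifts).\<close>

type_synonym 'd pt = "int ^ ('d::finite)"

definition in_lat :: "enat ^ ('d::finite) \<Rightarrow> int ^ 'd \<Rightarrow> bool" where
  "in_lat k m \<longleftrightarrow> (\<forall>j. case k $ j of enat c \<Rightarrow> int c dvd m $ j | \<infinity> \<Rightarrow> m $ j = 0)"

text \<open>Skew-bicharacter of Z^d_k, identified with its lift to Z^d.\<close>
definition skew_bichar :: "enat ^ ('d::finite) \<Rightarrow> (('d::finite) pt \<Rightarrow> ('d::finite) pt \<Rightarrow> complex) \<Rightarrow> bool" where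
  "skew_bichar k \<sigma> \<longleftrightarrow>
     (\<forall>n m. cmod (\<sigma> n m) = 1) \<and>
     (\<forall>n n' m. \<sigma> (n + n') m = \<sigma> n m * \<sigma> n' m) \<and>
     (\<forall>n m m'. \<sigma> n (m + m') = \<sigma> n m * \<sigma> n m') \<and>
     (\<forall>n m. \<sigma> n m = cnj (\<sigma> m n)) \<and>
     (\<forall>n n' m. in_lat k (n - n') \<longrightarrow> \<sigma> n m = \<sigma> n' m \<and> \<sigma> m n = \<sigma> m n')"

definition in_Xi :: "enat ^ ('d::finite) \<Rightarrow> (('d::finite) pt \<Rightarrow> ('d::finite) pt \<Rightarrow> complex) \<Rightarrow> bool" where
  "in_Xi k \<sigma> \<longleftrightarrow> (\<forall>j. k $ j \<ge> 2) \<and> skew_bichar k \<sigma>"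

text \<open>Convergence in the one-point compactification of the discrete N_* (i.e. N_* u {oo}).\<close>
definition enat_conv :: "(nat \<Rightarrow> enat) \<Rightarrow> enat \<Rightarrow> bool" where
  "enat_conv a c \<longleftrightarrow>
     (case c of enat m \<Rightarrow> eventually (\<lambda>n. a n = enat m) sequentially
              | \<infinity> \<Rightarrow> (\<forall>N::nat. eventually (\<lambda>n. a n \<ge> enat N) sequentially))"

definition Xi_conv :: "(nat \<Rightarrow> enat ^ ('d::finite)) \<Rightarrow> (nat \<Rightarrow> ('d::finite) pt \<Rightarrow> ('d::finite) pt \<Rightarrow> complex)
    \<Rightarrow> enat ^ ('d::finite) \<Rightarrow> (('d::finite) pt \<Rightarrow> ('d::finite) pt \<Rightarrow> complex) \<Rightarrow> bool" where
  "Xi_conv ks \<sigma>s k \<sigma> \<longleftrightarrow>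
     (\<forall>j. enat_conv (\<lambda>n. ks n $ j) (k $ j)) \<and>
     (\<forall>a b. (\<lambda>n. \<sigma>s n a b) \<longlonglongrightarrow> \<sigma> a b)"

definition I_set :: "enat ^ ('d::finite) \<Rightarrow> ('d::finite) pt set" where
  "I_set k = {m. \<forall>j. case k $ j of
       enat c \<Rightarrow> \<lfloor>(1 - real c) / 2\<rfloor> \<le> m $ j \<and> m $ j \<le> \<lfloor>(real c - 1) / 2\<rfloor>
     | \<infinity> \<Rightarrow> True}"

definition rep :: "enat ^ ('d::finite) \<Rightarrow> ('d::finite) pt \<Rightarrow> ('d::finite) pt" where
  "rep k n = (\<chi> j. case k $ j of
       enat c \<Rightarrow> \<lfloor>(1 - real c) / 2\<rfloor> + (n $ j - \<lfloor>(1 - real c) / 2\<rfloor>) mod int c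
     | \<infinity> \<Rightarrow> n $ j)"

definition ell1 :: "(('d::finite) pt \<Rightarrow> complex) \<Rightarrow> bool" where
  "ell1 f \<longleftrightarrow> (\<lambda>n. cmod (f n)) summable_on UNIV"

definition ell2 :: "(('d::finite) pt \<Rightarrow> complex) \<Rightarrow> bool" where
  "ell2 x \<longleftrightarrow> (\<lambda>i. (cmod (x i))\<^sup>2) summable_on UNIV"

definition l2norm :: "(('d::finite) pt \<Rightarrow> complex) \<Rightarrow> real" where
  "l2norm x = sqrt (\<Sum>\<^sub>\<infinity>i. (cmod (x i))\<^sup>2)"

definition opnorm :: "((('d::finite) pt \<Rightarrow> complex) \<Rightarrow> (('d::finite) pt \<Rightarrow> complex)) \<Rightarrow> real" where
  "opnorm A = Sup {l2norm (A x) | x. ell2 x \<and> l2norm x \<le> 1}"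

text \<open>Compact operator on l^2(Z^d): linear on l^2, maps l^2 into l^2, and the image of
  the closed unit ball is relatively compact (= totally bounded, l^2 being complete).\<close>
definition compact_op :: "((('d::finite) pt \<Rightarrow> complex) \<Rightarrow> (('d::finite) pt \<Rightarrow> complex)) \<Rightarrow> bool" where
  "compact_op T \<longleftrightarrow>
     (\<forall>x. ell2 x \<longrightarrow> ell2 (T x)) \<and>
     (\<forall>x y. ell2 x \<longrightarrow> ell2 y \<longrightarrow> T (\<lambda>i. x i + y i) = (\<lambda>i. T x i + T y i)) \<and>
     (\<forall>c x. ell2 x \<longrightarrow> T (\<lambda>i. c * x i) = (\<lambda>i. c * T x i)) \<and>
     (\<forall>e>0. \<exists>F. finite F \<and> (\<forall>z\<in>F. ell2 z) \<and>
        (\<forall>x. ell2 x \<and> l2norm x \<le> 1 \<longrightarrow> (\<exists>z\<in>F. l2norm (\<lambda>i. T x i - z i) < e)))"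

text \<open>upsilon_k : l^1(Z^d) -> l^1(Z^d_k), result as a k-periodic function on Z^d.\<close>
definition upsilon :: "enat ^ ('d::finite) \<Rightarrow> (('d::finite) pt \<Rightarrow> complex) \<Rightarrow> ('d::finite) pt \<Rightarrow> complex" where
  "upsilon k f n = (\<Sum>\<^sub>\<infinity>m\<in>{m. in_lat k m}. f (m + n))"

text \<open>U^n_{k,sigma} e_m = sigma(m,n) e_{m-n}, acting on k-periodic functions
  (vectors of l^2(Z^d_k)): (U^n x)(m) = sigma(m+n,n) x(m+n).\<close>
definition Uop :: "(('d::finite) pt \<Rightarrow> ('d::finite) pt \<Rightarrow> complex) \<Rightarrow> ('d::finite) pt \<Rightarrow> (('d::finite) pt \<Rightarrow> complex) \<Rightarrow> ('d::finite) pt \<Rightarrow> complex" where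
  "Uop \<sigma> n x m = \<sigma> (m + n) n * x (m + n)"

text \<open>rho_{k,sigma}(g) = sum over n in Z^d_k of g(n) U^n (n ranging over representatives I_k).\<close>
definition rho :: "enat ^ ('d::finite) \<Rightarrow> (('d::finite) pt \<Rightarrow> ('d::finite) pt \<Rightarrow> complex) \<Rightarrow> (('d::finite) pt \<Rightarrow> complex)
    \<Rightarrow> (('d::finite) pt \<Rightarrow> complex) \<Rightarrow> ('d::finite) pt \<Rightarrow> complex" where
  "rho k \<sigma> g x m = (\<Sum>\<^sub>\<infinity>n\<in>I_set k. g n * Uop \<sigma> n x m)"

text \<open>pi_{k,sigma}(A): on H_p (p in k Z^d) acts as W_p A W_p^*, where W_p e_{q_k(j)} = e_{j+p},
  j in I_k.  For i = j + p (j = rep k i): (W_p^* y)(m) = y(rep k m + p).\<close>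
definition pi_rep :: "enat ^ ('d::finite) \<Rightarrow> ((('d::finite) pt \<Rightarrow> complex) \<Rightarrow> (('d::finite) pt \<Rightarrow> complex))
    \<Rightarrow> (('d::finite) pt \<Rightarrow> complex) \<Rightarrow> ('d::finite) pt \<Rightarrow> complex" where
  "pi_rep k A y i = (let p = i - rep k i in A (\<lambda>m. y (rep k m + p)) (rep k i))"

end

theory Submission
  imports Defs "HOL-Analysis.Analysis"
begin


definition latc :: "enat \<Rightarrow> int \<Rightarrow> bool" where
  "latc c x \<longleftrightarrow> (case c of enat c \<Rightarrow> int c dvd x | \<infinity> \<Rightarrow> x = 0)"

definition repc :: "enat \<Rightarrow> int \<Rightarrow> int" where
  "repc c x = (case c of enat c \<Rightarrow> \<lfloor>(1 - real c) / 2\<rfloor> + (x - \<lfloor>(1 - real c) / 2\<rfloor>) mod int c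
     | \<infinity> \<Rightarrow> x)"

definition Ic :: "enat \<Rightarrow> int \<Rightarrow> bool" where
  "Ic c x \<longleftrightarrow> (case c of enat c \<Rightarrow> \<lfloor>(1 - real c) / 2\<rfloor> \<le> x \<and> x \<le> \<lfloor>(real c - 1) / 2\<rfloor>
     | \<infinity> \<Rightarrow> True)"

lemma in_lat_iff: "in_lat k m \<longleftrightarrow> (\<forall>j. latc (k$j) (m$j))"
  by (simp add: in_lat_def latc_def)

lemma rep_nth[simp]: "rep k n $ j = repc (k$j) (n$j)"
  by (simp add: rep_def repc_def)

lemma I_set_iff: "m \<in> I_set k \<longleftrightarrow> (\<forall>j. Ic (k$j) (m$j))"
  by (simp add: I_set_def Ic_def)

lemma lo_eq: "\<lfloor>(1 - real c) / 2\<rfloor> = (1 - int c) div 2"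
proof -
  have "(1 - real c) / 2 = real_of_int (1 - int c) / real_of_int 2" by simp
  then show ?thesis by (metis floor_divide_of_int_eq)
qed

lemma hi_eq: "\<lfloor>(real c - 1) / 2\<rfloor> = (int c - 1) div 2"
proof -
  have "(real c - 1) / 2 = real_of_int (int c - 1) / real_of_int 2" by simp
  then show ?thesis by (metis floor_divide_of_int_eq)
qed

lemma latc_0[simp]: "latc c 0" by (cases c) (auto simp: latc_def)
lemma latc_add: "latc c a \<Longrightarrow> latc c b \<Longrightarrow> latc c (a + b)"
  by (cases c) (auto simp: latc_def)
lemma latc_diff: "latc c a \<Longrightarrow> latc c b \<Longrightarrow> latc c (a - b)"
  by (cases c) (auto simp: latc_def)
lemma latc_minus: "latc c a \<Longrightarrow> latc c (- a)"
  by (cases c) (auto simp: latc_def)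

lemma latc_rep: "latc c (x - repc c x)"
proof (cases c)
  case (enat n)
  then show ?thesis
  proof -
    let ?l = "\<lfloor>(1 - real n) / 2\<rfloor>"
    have "x - (?l + (x - ?l) mod int n) = (x - ?l) - (x - ?l) mod int n" by simp
    also have "\<dots> = int n * ((x - ?l) div int n)" by (simp add: minus_mod_eq_mult_div)
    finally show ?thesis using enat by (simp add: latc_def repc_def)
  qed
qed (simp add: latc_def repc_def)

lemma repc_eq: "latc c (x - y) \<Longrightarrow> repc c x = repc c y"
proof (cases c)
  case (enat n)
  assume "latc c (x - y)"
  then have "int n dvd (x - y)" using enat by (simp add: latc_def)
  then have "(x - \<lfloor>(1 - real n) / 2\<rfloor>) mod int n = (y - \<lfloor>(1 - real n) / 2\<rfloor>) mod int n"
    by (simp add: mod_eq_dvd_iff)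
  then show ?thesis using enat by (simp add: repc_def)
next
  case infinity
  assume "latc c (x - y)" then show ?thesis using infinity by (simp add: latc_def repc_def)
qed

lemma Ic_rep: "c \<ge> 2 \<Longrightarrow> Ic c (repc c x)"
proof (cases c)
  case (enat n)
  assume "c \<ge> 2"
  then have n: "n \<ge> 2" using enat by (simp add: numeral_eq_enat)
  have "0 \<le> (x - (1 - int n) div 2) mod int n" "(x - (1 - int n) div 2) mod int n < int n" using n by auto
  moreover have "(int n - 1) div 2 - (1 - int n) div 2 = int n - 1" by presburger
  ultimately show ?thesis using enat by (simp add: Ic_def repc_def lo_eq hi_eq)
qed (simp add: Ic_def)

lemma rep_Ic: "c \<ge> 2 \<Longrightarrow> Ic c x \<Longrightarrow> repc c x = x"
proof (cases c)
  case (enat n)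
  assume "c \<ge> 2" "Ic c x"
  then have n: "n \<ge> 2" and x: "(1 - int n) div 2 \<le> x" "x \<le> (int n - 1) div 2" using enat
    by (auto simp: numeral_eq_enat Ic_def lo_eq hi_eq)
  have "(int n - 1) div 2 - (1 - int n) div 2 = int n - 1" by presburger
  then have "(x - (1 - int n) div 2) mod int n = x - (1 - int n) div 2"
    using x by (intro mod_pos_pos_trivial) auto
  then show ?thesis using enat by (simp add: repc_def lo_eq)
qed (simp add: repc_def)

lemma rep_big: assumes "c \<ge> enat (2 * N + 2)" "\<bar>x\<bar> \<le> int N" shows "repc c x = x"
proof (cases c)
  case (enat n)
  then have n: "n \<ge> 2 * N + 2" using assms by simp
  have "(1 - int n) div 2 \<le> x" "x \<le> (int n - 1) div 2" using n assms(2) by presburger+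
  then have "Ic c x" using enat by (simp add: Ic_def lo_eq hi_eq)
  moreover have "c \<ge> 2" using n enat by (simp add: numeral_eq_enat)
  ultimately show ?thesis using rep_Ic by blast
qed (simp add: repc_def)



lemma wcs:
  fixes c w :: "'b \<Rightarrow> real"
  assumes c0: "\<And>m. c m \<ge> 0" and cs: "c summable_on UNIV"
    and w0: "\<And>m. w m \<ge> 0" and qs: "(\<lambda>m. c m * (w m)\<^sup>2) summable_on UNIV"
  shows "(\<lambda>m. c m * w m) summable_on UNIV"
    and "(infsum (\<lambda>m. c m * w m) UNIV)\<^sup>2 \<le> infsum c UNIV * infsum (\<lambda>m. c m * (w m)\<^sup>2) UNIV"
proof -
  have le: "c m * w m \<le> c m + c m * (w m)\<^sup>2" for m
  proof -
    have "w m \<le> 1 + (w m)\<^sup>2" by (smt (verit, ccfv_SIG) power2_eq_square mult_le_cancel_left1 w0 zero_le_power2)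
    then have "c m * w m \<le> c m * (1 + (w m)\<^sup>2)" using c0 by (intro mult_left_mono) auto
    then show ?thesis by (simp add: algebra_simps)
  qed
  show sw: "(\<lambda>m. c m * w m) summable_on UNIV"
    by (rule summable_on_comparison_test[OF summable_on_add[OF cs qs]]) (use le c0 w0 in auto)
  define C where "C = infsum c UNIV"
  define S where "S = infsum (\<lambda>m. c m * w m) UNIV"
  define Q where "Q = infsum (\<lambda>m. c m * (w m)\<^sup>2) UNIV"
  show "(infsum (\<lambda>m. c m * w m) UNIV)\<^sup>2 \<le> infsum c UNIV * infsum (\<lambda>m. c m * (w m)\<^sup>2) UNIV"
  proof (cases "C = 0")
    case True
    then have "c m = 0" for m using nonneg_infsum_le_0D[of c UNIV m] cs c0 C_def by auto
    then show ?thesis by simp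
  next
    case False
    have C0: "C > 0" using False infsum_nonneg[of UNIV c] c0 C_def by fastforce
    define t where "t = S / C"
    have eq: "c m * (w m - t)\<^sup>2 = c m * (w m)\<^sup>2 + ((-2*t) * (c m * w m) + t\<^sup>2 * c m)" for m
      by (simp add: power2_eq_square algebra_simps)
    have "0 \<le> infsum (\<lambda>m. c m * (w m - t)\<^sup>2) UNIV"
      by (rule infsum_nonneg) (use c0 in auto)
    also have "\<dots> = Q + ((-2*t) * S + t\<^sup>2 * C)"
      unfolding eq Q_def S_def C_def
      by (subst infsum_add, rule qs, intro summable_on_add summable_on_cmult_right sw cs,
          subst infsum_add, intro summable_on_cmult_right sw, intro summable_on_cmult_right cs,
          simp add: infsum_cmult_right' infsum_uminus)
    also have "\<dots> = Q - S\<^sup>2 / C" using C0 unfolding t_def by (simp add: power2_eq_square field_simps)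
    finally have "S\<^sup>2 \<le> C * Q" using C0 by (simp add: field_simps)
    then show ?thesis by (simp add: S_def C_def Q_def)
  qed
qed

lemma sum_norm_bound:
  fixes f :: "'b \<Rightarrow> complex" and y :: "'b \<Rightarrow> 'a \<Rightarrow> complex"
  assumes f: "(\<lambda>m. cmod (f m)) summable_on UNIV"
    and bnd: "\<And>m i. cmod (y m i) \<le> B"
    and l2: "\<And>m. (\<lambda>i. (cmod (y m i))\<^sup>2) summable_on UNIV"
    and Nb: "\<And>m. infsum (\<lambda>i. (cmod (y m i))\<^sup>2) UNIV \<le> M"
  shows "(\<lambda>i. (cmod (infsum (\<lambda>m. f m * y m i) UNIV))\<^sup>2) summable_on UNIV"
    and "infsum (\<lambda>i. (cmod (infsum (\<lambda>m. f m * y m i) UNIV))\<^sup>2) UNIV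
         \<le> infsum (\<lambda>m. cmod (f m)) UNIV * infsum (\<lambda>m. cmod (f m) * infsum (\<lambda>i. (cmod (y m i))\<^sup>2) UNIV) UNIV"
proof -
  define c where "c m = cmod (f m)" for m
  define C where "C = infsum c UNIV"
  define N where "N m = infsum (\<lambda>i. (cmod (y m i))\<^sup>2) UNIV" for m
  define h where "h m i = c m * (cmod (y m i))\<^sup>2" for m i
  have c0: "c m \<ge> 0" for m by (simp add: c_def)
  have cs: "c summable_on UNIV" unfolding c_def[abs_def] using f .
  have B0: "B \<ge> 0" using bnd[of undefined undefined] norm_ge_zero order_trans by blast
  have N0: "N m \<ge> 0" for m unfolding N_def by (rule infsum_nonneg) auto
  have cws: "(\<lambda>m. c m * (cmod (y m i))\<^sup>2) summable_on UNIV" for i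
  proof (rule summable_on_comparison_test[OF summable_on_cmult_left[OF cs, of "B\<^sup>2"]])
    fix m show "c m * (cmod (y m i))\<^sup>2 \<le> c m * B\<^sup>2"
      using c0 bnd[of m i] by (intro mult_left_mono power_mono) auto
  qed (use c0 in auto)
  have hs: "(\<lambda>(m,i). h m i) summable_on (UNIV \<times> UNIV)"
  proof (rule summable_on_SigmaI[where g = "\<lambda>m. c m * N m"])
    fix m :: 'b
    show "((\<lambda>i. (\<lambda>(m,i). h m i) (m, i)) has_sum c m * N m) UNIV"
      unfolding h_def N_def by (simp, intro has_sum_cmult_right has_sum_infsum l2)
  next
    show "(\<lambda>m. c m * N m) summable_on UNIV"
    proof (rule summable_on_comparison_test[OF summable_on_cmult_left[OF cs, of M]])
      fix m show "c m * N m \<le> c m * M" using c0 Nb[of m] by (intro mult_left_mono) (auto simp: N_def)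
      show "0 \<le> c m * N m" using c0 N0 by simp
    qed
  qed (auto simp: h_def c0)
  have hs': "(\<lambda>(i,m). h m i) summable_on (UNIV \<times> UNIV)"
    using hs by (subst summable_on_swap) (simp add: case_prod_unfold)
  define G where "G i = infsum (\<lambda>m. h m i) UNIV" for i
  have Gs: "G summable_on UNIV"
    unfolding G_def using summable_on_Sigma_banach[OF hs'] by simp
  have Gsum: "infsum G UNIV = infsum (\<lambda>m. c m * N m) UNIV"
  proof -
    have "infsum G UNIV = infsum (\<lambda>m. infsum (\<lambda>i. h m i) UNIV) UNIV"
      unfolding G_def using infsum_swap_banach[OF hs'] by simp
    also have "\<dots> = infsum (\<lambda>m. c m * N m) UNIV"
      unfolding h_def N_def by (simp add: infsum_cmult_right')
    finally show ?thesis .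
  qed
  have pw: "(cmod (infsum (\<lambda>m. f m * y m i) UNIV))\<^sup>2 \<le> C * G i" for i
  proof -
    have ab: "(\<lambda>m. c m * cmod (y m i)) summable_on UNIV"
      using wcs(1)[OF c0 cs _ cws] by simp
    have fs: "(\<lambda>m. f m * y m i) summable_on UNIV"
      by (rule abs_summable_summable, rule summable_on_comparison_test[OF ab])
         (auto simp: c_def norm_mult)
    have "cmod (infsum (\<lambda>m. f m * y m i) UNIV) \<le> infsum (\<lambda>m. c m * cmod (y m i)) UNIV"
      by (rule norm_infsum_le[OF has_sum_infsum[OF fs] has_sum_infsum[OF ab]]) (simp add: c_def norm_mult)
    then have "(cmod (infsum (\<lambda>m. f m * y m i) UNIV))\<^sup>2 \<le> (infsum (\<lambda>m. c m * cmod (y m i)) UNIV)\<^sup>2"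
      by (intro power_mono) auto
    also have "\<dots> \<le> C * G i" unfolding C_def G_def h_def
      using wcs(2)[OF c0 cs _ cws] by simp
    finally show ?thesis .
  qed
  have CG: "(\<lambda>i. C * G i) summable_on UNIV" by (intro summable_on_cmult_right Gs)
  show s1: "(\<lambda>i. (cmod (infsum (\<lambda>m. f m * y m i) UNIV))\<^sup>2) summable_on UNIV"
    by (rule summable_on_comparison_test[OF CG pw]) auto
  have "infsum (\<lambda>i. (cmod (infsum (\<lambda>m. f m * y m i) UNIV))\<^sup>2) UNIV \<le> infsum (\<lambda>i. C * G i) UNIV"
    by (rule infsum_mono[OF s1 CG pw])
  also have "\<dots> = C * infsum (\<lambda>m. c m * N m) UNIV" by (simp add: infsum_cmult_right' Gsum)
  finally show "infsum (\<lambda>i. (cmod (infsum (\<lambda>m. f m * y m i) UNIV))\<^sup>2) UNIV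
         \<le> infsum (\<lambda>m. cmod (f m)) UNIV * infsum (\<lambda>m. cmod (f m) * infsum (\<lambda>i. (cmod (y m i))\<^sup>2) UNIV) UNIV"
    by (simp add: C_def c_def[abs_def] N_def)
qed

lemma tail_small:
  fixes z :: "'a \<Rightarrow> real"
  assumes "z summable_on UNIV" "\<delta> > 0"
  shows "\<exists>S. finite S \<and> infsum z (UNIV - S) \<le> \<delta>"
proof -
  obtain S where S: "finite S" "dist (sum z S) (infsum z UNIV) \<le> \<delta>"
    using infsum_finite_approximation[OF assms] by auto
  have "infsum z (UNIV - S) = infsum z UNIV - sum z S"
    using assms S by (subst infsum_Diff) auto
  then show ?thesis using S by (auto simp: dist_real_def)
qed

lemma dom_conv:
  fixes c :: "'b \<Rightarrow> real" and g :: "nat \<Rightarrow> 'b \<Rightarrow> real"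
  assumes c0: "\<And>m. c m \<ge> 0" and cs: "c summable_on UNIV"
    and g0: "\<And>n m. g n m \<ge> 0" and gM: "\<And>n m. g n m \<le> M"
    and gl: "\<And>m. (\<lambda>n. g n m) \<longlonglongrightarrow> 0"
  shows "(\<lambda>n. infsum (\<lambda>m. c m * g n m) UNIV) \<longlonglongrightarrow> 0"
proof (rule LIMSEQ_I)
  fix r :: real assume r: "r > 0"
  have M0: "M \<ge> 0" using g0 gM order_trans by blast
  define \<delta> where "\<delta> = r / (2 * (M + 1))"
  have d0: "\<delta> > 0" using r M0 by (simp add: \<delta>_def)
  obtain F where F: "finite F" "infsum c (UNIV - F) \<le> \<delta>"
    using tail_small[OF cs d0] by auto
  have cgs: "(\<lambda>m. c m * g n m) summable_on A" for n A
    by (rule summable_on_subset[OF summable_on_comparison_test[OF summable_on_cmult_left[OF cs, of M]]])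
       (use c0 g0 gM in \<open>auto intro: mult_left_mono\<close>)
  have "(\<lambda>n. \<Sum>m\<in>F. c m * g n m) \<longlonglongrightarrow> (\<Sum>m\<in>F. c m * 0)"
    by (intro tendsto_intros gl)
  then have lim: "(\<lambda>n. \<Sum>m\<in>F. c m * g n m) \<longlonglongrightarrow> 0" by simp
  have "\<forall>\<^sub>F n in sequentially. (\<Sum>m\<in>F. c m * g n m) < r / 2"
    by (rule order_tendstoD(2)[OF lim]) (use r in simp)
  then obtain N where N: "\<And>n. n \<ge> N \<Longrightarrow> (\<Sum>m\<in>F. c m * g n m) < r / 2"
    by (auto simp: eventually_sequentially)
  show "\<exists>N. \<forall>n\<ge>N. norm (infsum (\<lambda>m. c m * g n m) UNIV - 0) < r"
  proof (intro exI allI impI)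
    fix n assume n: "n \<ge> N"
    have split: "infsum (\<lambda>m. c m * g n m) UNIV = infsum (\<lambda>m. c m * g n m) F + infsum (\<lambda>m. c m * g n m) (UNIV - F)"
      using infsum_Un_disjoint[OF cgs cgs, of F "UNIV - F" n] by (simp add: Un_Diff_cancel)
    have t: "infsum (\<lambda>m. c m * g n m) (UNIV - F) \<le> infsum (\<lambda>m. c m * M) (UNIV - F)"
      by (rule infsum_mono[OF cgs]) (use c0 gM summable_on_subset[OF summable_on_cmult_left[OF cs]] in \<open>auto intro: mult_left_mono\<close>)
    also have "\<dots> = infsum c (UNIV - F) * M" by (simp add: infsum_cmult_left')
    also have "\<dots> \<le> \<delta> * M" using F M0 by (intro mult_right_mono) auto
    also have "\<dots> < r / 2" using r M0 unfolding \<delta>_def by (simp add: field_simps)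
    finally have "infsum (\<lambda>m. c m * g n m) (UNIV - F) < r / 2" .
    moreover have "infsum (\<lambda>m. c m * g n m) F < r / 2" using N[OF n] F by simp
    moreover have "infsum (\<lambda>m. c m * g n m) UNIV \<ge> 0" by (rule infsum_nonneg) (use c0 g0 in auto)
    ultimately show "norm (infsum (\<lambda>m. c m * g n m) UNIV - 0) < r" using split by simp
  qed
qed



lemma perm_l2:
  fixes z s :: "'a \<Rightarrow> complex" and \<tau> \<tau>' :: "'a \<Rightarrow> 'a"
  assumes inv1: "\<And>i. \<tau>' (\<tau> i) = i" and inv2: "\<And>j. \<tau> (\<tau>' j) = j"
    and s1: "\<And>i. cmod (s i) = 1"
    and zs: "(\<lambda>j. (cmod (z j))\<^sup>2) summable_on UNIV"
  shows "(\<lambda>i. (cmod (s i * z (\<tau> i)))\<^sup>2) summable_on UNIV"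
    and "infsum (\<lambda>i. (cmod (s i * z (\<tau> i)))\<^sup>2) UNIV = infsum (\<lambda>j. (cmod (z j))\<^sup>2) UNIV"
proof -
  have e: "(\<lambda>i. (cmod (s i * z (\<tau> i)))\<^sup>2) = (\<lambda>i. (cmod (z (\<tau> i)))\<^sup>2)"
    by (simp add: norm_mult s1)
  have "(\<lambda>j. (cmod (z j))\<^sup>2) summable_on UNIV \<longleftrightarrow> (\<lambda>i. (cmod (z (\<tau> i)))\<^sup>2) summable_on UNIV"
    by (rule summable_on_reindex_bij_witness[where i = \<tau> and j = \<tau>']) (auto simp: inv1 inv2)
  then show "(\<lambda>i. (cmod (s i * z (\<tau> i)))\<^sup>2) summable_on UNIV" using zs e by simp
  have "infsum (\<lambda>j. (cmod (z j))\<^sup>2) UNIV = infsum (\<lambda>i. (cmod (z (\<tau> i)))\<^sup>2) UNIV"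
    by (rule infsum_reindex_bij_witness[where i = \<tau> and j = \<tau>']) (auto simp: inv1 inv2)
  then show "infsum (\<lambda>i. (cmod (s i * z (\<tau> i)))\<^sup>2) UNIV = infsum (\<lambda>j. (cmod (z j))\<^sup>2) UNIV"
    using e by simp
qed

lemma sq_diff_le: "(cmod (a - b))\<^sup>2 \<le> 2 * (cmod a)\<^sup>2 + 2 * (cmod b)\<^sup>2"
proof -
  have "cmod (a - b) \<le> cmod a + cmod b" by (rule norm_triangle_ineq4)
  then have "(cmod (a - b))\<^sup>2 \<le> (cmod a + cmod b)\<^sup>2" by (intro power_mono) auto
  also have "\<dots> \<le> 2 * (cmod a)\<^sup>2 + 2 * (cmod b)\<^sup>2"
    by (smt (verit, best) power2_sum sum_squares_bound)
  finally show ?thesis .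
qed

lemma strong_perm:
  fixes z :: "'a \<Rightarrow> complex" and \<tau>n \<tau>n' :: "nat \<Rightarrow> 'a \<Rightarrow> 'a" and \<tau> \<tau>' :: "'a \<Rightarrow> 'a"
    and sn :: "nat \<Rightarrow> 'a \<Rightarrow> complex" and s :: "'a \<Rightarrow> complex"
  assumes inv1: "\<And>i. \<tau>' (\<tau> i) = i" and inv2: "\<And>j. \<tau> (\<tau>' j) = j"
    and invn1: "\<And>n i. \<tau>n' n (\<tau>n n i) = i" and invn2: "\<And>n j. \<tau>n n (\<tau>n' n j) = j"
    and s1: "\<And>i. cmod (s i) = 1" and sn1: "\<And>n i. cmod (sn n i) = 1"
    and ev1: "\<And>i. eventually (\<lambda>n. \<tau>n n i = \<tau> i) sequentially"
    and ev2: "\<And>j. eventually (\<lambda>n. \<tau>n' n j = \<tau>' j) sequentially"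
    and sl: "\<And>i. (\<lambda>n. sn n i) \<longlonglongrightarrow> s i"
    and zs: "(\<lambda>j. (cmod (z j))\<^sup>2) summable_on UNIV"
  shows "(\<lambda>n. infsum (\<lambda>i. (cmod (sn n i * z (\<tau>n n i) - s i * z (\<tau> i)))\<^sup>2) UNIV) \<longlonglongrightarrow> 0"
proof (rule LIMSEQ_I)
  fix r :: real assume r: "r > 0"
  define \<delta> where "\<delta> = r / 6"
  have d0: "\<delta> > 0" using r by (simp add: \<delta>_def)
  obtain S where S: "finite S" "infsum (\<lambda>j. (cmod (z j))\<^sup>2) (UNIV - S) \<le> \<delta>"
    using tail_small[OF zs d0] by auto
  define P where "P = \<tau>' ` S"
  have P: "finite P" using S by (simp add: P_def)
  define D where "D n i = (cmod (sn n i * z (\<tau>n n i) - s i * z (\<tau> i)))\<^sup>2" for n i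
  define h where "h j = (if j \<in> S then 0 else (cmod (z j))\<^sup>2)" for j
  have Dlim: "(\<lambda>n. D n i) \<longlonglongrightarrow> 0" if "i \<in> P" for i
  proof -
    have "(\<lambda>n. (cmod (sn n i * z (\<tau> i) - s i * z (\<tau> i)))\<^sup>2) \<longlonglongrightarrow> (cmod (s i * z (\<tau> i) - s i * z (\<tau> i)))\<^sup>2"
      by (intro tendsto_intros sl)
    then have l: "(\<lambda>n. (cmod (sn n i * z (\<tau> i) - s i * z (\<tau> i)))\<^sup>2) \<longlonglongrightarrow> 0" by simp
    have "eventually (\<lambda>n. (cmod (sn n i * z (\<tau> i) - s i * z (\<tau> i)))\<^sup>2 = D n i) sequentially"
      using ev1[of i] by eventually_elim (simp add: D_def)
    then show ?thesis using l by (rule Lim_transform_eventually[rotated])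
  qed
  have "(\<lambda>n. \<Sum>i\<in>P. D n i) \<longlonglongrightarrow> (\<Sum>i\<in>P. 0)"
    by (rule tendsto_sum) (use Dlim in auto)
  then have "eventually (\<lambda>n. (\<Sum>i\<in>P. D n i) < \<delta>) sequentially"
    using d0 by (intro order_tendstoD(2)) auto
  moreover have "eventually (\<lambda>n. \<forall>j\<in>S. \<tau>n' n j = \<tau>' j) sequentially"
    using S(1) ev2 by (simp add: eventually_ball_finite)
  ultimately have "eventually (\<lambda>n. (\<Sum>i\<in>P. D n i) < \<delta> \<and> (\<forall>j\<in>S. \<tau>n' n j = \<tau>' j)) sequentially"
    by (rule eventually_conj)
  then obtain N where N: "\<And>n. n \<ge> N \<Longrightarrow> (\<Sum>i\<in>P. D n i) < \<delta> \<and> (\<forall>j\<in>S. \<tau>n' n j = \<tau>' j)"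
    by (auto simp: eventually_sequentially)
  have hs: "h summable_on UNIV"
    by (rule summable_on_comparison_test[OF zs]) (auto simp: h_def)
  have hsum: "infsum h UNIV \<le> \<delta>"
  proof -
    have "infsum h UNIV = infsum h (UNIV - S)"
      by (rule infsum_cong_neutral) (auto simp: h_def)
    also have "\<dots> = infsum (\<lambda>j. (cmod (z j))\<^sup>2) (UNIV - S)"
      by (rule infsum_cong) (auto simp: h_def)
    finally show ?thesis using S by simp
  qed
  have hreind: "(\<lambda>i. h (t i)) summable_on UNIV \<and> infsum (\<lambda>i. h (t i)) UNIV = infsum h UNIV"
    if "\<And>i. t' (t i) = i" "\<And>j. t (t' j) = j" for t t' :: "'a \<Rightarrow> 'a"
  proof
    have "h summable_on UNIV \<longleftrightarrow> (\<lambda>i. h (t i)) summable_on UNIV"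
      by (rule summable_on_reindex_bij_witness[where i = t and j = t']) (auto simp: that)
    then show "(\<lambda>i. h (t i)) summable_on UNIV" using hs by simp
    show "infsum (\<lambda>i. h (t i)) UNIV = infsum h UNIV"
      by (rule infsum_reindex_bij_witness[where i = t' and j = t]) (simp_all add: that)
  qed
  have zr: "(\<lambda>i. (cmod (z (t i)))\<^sup>2) summable_on UNIV"
    if "\<And>i. t' (t i) = i" "\<And>j. t (t' j) = j" for t t' :: "'a \<Rightarrow> 'a"
    using perm_l2(1)[of t' t "\<lambda>_. 1" z, OF that _ zs] by simp
  show "\<exists>N. \<forall>n\<ge>N. norm (infsum (D n) UNIV - 0) < r"
  proof (intro exI allI impI)
    fix n assume n: "n \<ge> N"
    have bound: "D n i \<le> 2 * (cmod (z (\<tau>n n i)))\<^sup>2 + 2 * (cmod (z (\<tau> i)))\<^sup>2" for i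
      unfolding D_def using sq_diff_le[of "sn n i * z (\<tau>n n i)" "s i * z (\<tau> i)"]
      by (simp add: norm_mult s1 sn1)
    have Ds: "D n summable_on A" for A
      by (rule summable_on_subset[OF summable_on_comparison_test[OF
            summable_on_add[OF summable_on_cmult_right[OF zr[where t = "\<tau>n n" and t' = "\<tau>n' n", OF invn1 invn2]]
            summable_on_cmult_right[OF zr[where t = "\<tau>" and t' = "\<tau>'", OF inv1 inv2]]] bound]])
         (auto simp: D_def)
    have outside: "D n i \<le> 2 * h (\<tau>n n i) + 2 * h (\<tau> i)" if "i \<notin> P" for i
    proof -
      have "\<tau>n n i \<notin> S"
      proof
        assume a: "\<tau>n n i \<in> S"
        then have "\<tau>n' n (\<tau>n n i) = \<tau>' (\<tau>n n i)" using N[OF n] by auto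
        then have "i = \<tau>' (\<tau>n n i)" by (simp add: invn1)
        then show False using a that by (auto simp: P_def)
      qed
      moreover have "\<tau> i \<notin> S"
      proof
        assume "\<tau> i \<in> S" then have "\<tau>' (\<tau> i) \<in> P" by (auto simp: P_def)
        then show False using that by (simp add: inv1)
      qed
      ultimately show ?thesis using bound[of i] by (simp add: h_def)
    qed
    obtain hn: "(\<lambda>i. h (\<tau>n n i)) summable_on UNIV" "infsum (\<lambda>i. h (\<tau>n n i)) UNIV = infsum h UNIV"
      using hreind[where t = "\<tau>n n" and t' = "\<tau>n' n", OF invn1 invn2] by blast
    obtain ht: "(\<lambda>i. h (\<tau> i)) summable_on UNIV" "infsum (\<lambda>i. h (\<tau> i)) UNIV = infsum h UNIV"
      using hreind[where t = "\<tau>" and t' = "\<tau>'", OF inv1 inv2] by blast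
    have H: "(\<lambda>i. 2 * h (\<tau>n n i) + 2 * h (\<tau> i)) summable_on UNIV"
      by (intro summable_on_add summable_on_cmult_right hn ht)
    have h0: "h j \<ge> 0" for j by (simp add: h_def)
    have split: "infsum (D n) UNIV = infsum (D n) P + infsum (D n) (UNIV - P)"
      using infsum_Un_disjoint[OF Ds Ds, of P "UNIV - P"] by (simp add: Un_Diff_cancel)
    have "infsum (D n) (UNIV - P) \<le> infsum (\<lambda>i. 2 * h (\<tau>n n i) + 2 * h (\<tau> i)) (UNIV - P)"
      by (rule infsum_mono[OF Ds summable_on_subset[OF H]]) (use outside in auto)
    also have "\<dots> \<le> infsum (\<lambda>i. 2 * h (\<tau>n n i) + 2 * h (\<tau> i)) UNIV"
      by (rule infsum_mono2[OF summable_on_subset[OF H] H]) (auto simp: h0)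
    also have "\<dots> = 4 * infsum h UNIV"
      by (subst infsum_add) (auto intro!: summable_on_cmult_right hn ht simp: infsum_cmult_right' hn ht)
    also have "\<dots> \<le> 4 * \<delta>" using hsum by simp
    finally have o: "infsum (D n) (UNIV - P) \<le> 4 * \<delta>" .
    have i: "infsum (D n) P < \<delta>" using N[OF n] P by simp
    have nn: "infsum (D n) UNIV \<ge> 0" by (rule infsum_nonneg) (simp add: D_def)
    show "norm (infsum (D n) UNIV - 0) < r"
      using split o i nn r unfolding \<delta>_def by simp
  qed
qed



lemma lat_rep: "in_lat k (x - rep k x)"
  by (simp add: in_lat_iff latc_rep)
lemma rep_eq_lat: "in_lat k (x - y) \<Longrightarrow> rep k x = rep k y"
  by (simp add: in_lat_iff vec_eq_iff repc_eq)
lemma lat_add: "in_lat k a \<Longrightarrow> in_lat k b \<Longrightarrow> in_lat k (a + b)"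
  by (simp add: in_lat_iff latc_add)
lemma lat_diff: "in_lat k a \<Longrightarrow> in_lat k b \<Longrightarrow> in_lat k (a - b)"
  by (simp add: in_lat_iff latc_diff)
lemma lat_minus: "in_lat k a \<Longrightarrow> in_lat k (- a)"
  by (simp add: in_lat_iff latc_minus)
lemma rep_in_I: "\<forall>j. k$j \<ge> 2 \<Longrightarrow> rep k x \<in> I_set k"
  by (simp add: I_set_iff Ic_rep)
lemma I_rep: "\<forall>j. k$j \<ge> 2 \<Longrightarrow> x \<in> I_set k \<Longrightarrow> rep k x = x"
  by (simp add: I_set_iff vec_eq_iff rep_Ic)
lemma rep_rep: "rep k (rep k x) = rep k x"
proof -
  have "in_lat k (rep k x - x)" using lat_minus[OF lat_rep[of k x]] by simp
  then show ?thesis by (rule rep_eq_lat)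
qed

definition tau :: "enat ^ ('d::finite) \<Rightarrow> 'd pt \<Rightarrow> 'd pt \<Rightarrow> 'd pt" where
  "tau k i m = rep k (rep k i + m) + (i - rep k i)"

lemma tau_inv: "tau k (tau k i m) (-m) = i"
proof -
  define r where "r = rep k i"
  define p where "p = i - r"
  define s where "s = rep k (r + m)"
  have t: "tau k i m = s + p" by (simp add: tau_def r_def p_def s_def)
  have "rep k (s + p) = rep k s"
    by (rule rep_eq_lat) (simp add: p_def r_def lat_rep)
  then have rs: "rep k (s + p) = s" by (simp add: s_def rep_rep)
  have "rep k (s - m) = rep k r"
  proof (rule rep_eq_lat)
    have e: "s - m - r = -((r + m) - rep k (r + m))" by (simp add: s_def algebra_simps)
    show "in_lat k (s - m - r)" unfolding e by (rule lat_minus[OF lat_rep])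
  qed
  then have sm: "rep k (s - m) = r" by (simp add: r_def rep_rep)
  have "tau k (tau k i m) (-m) = tau k (s + p) (-m)" by (simp only: t)
  also have "\<dots> = rep k (rep k (s + p) + - m) + ((s + p) - rep k (s + p))" by (simp only: tau_def)
  also have "\<dots> = r + p" using rs sm by simp
  also have "\<dots> = i" by (simp add: p_def)
  finally show ?thesis .
qed

lemma tau_inv': "tau k (tau k i (-m)) m = i"
  using tau_inv[of k i "-m"] by simp

definition tauc :: "enat \<Rightarrow> int \<Rightarrow> int \<Rightarrow> int" where
  "tauc c x a = repc c (repc c x + a) + (x - repc c x)"

lemma tau_nth: "tau k i m $ j = tauc (k$j) (i$j) (m$j)"
  by (simp add: tau_def tauc_def)

lemma tau_conv:
  fixes ks :: "nat \<Rightarrow> enat ^ ('d::finite)"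
  assumes kc: "\<forall>j. enat_conv (\<lambda>n. ks n $ j) (k $ j)"
  shows "eventually (\<lambda>n. tau (ks n) i m = tau k i m) sequentially"
proof -
  have "eventually (\<lambda>n. tauc (ks n $ j) (i$j) (m$j) = tauc (k$j) (i$j) (m$j)) sequentially" for j
  proof (cases "k$j")
    case (enat c)
    then have "eventually (\<lambda>n. ks n $ j = enat c) sequentially"
      using kc[rule_format, of j] by (simp add: enat_conv_def)
    then show ?thesis by eventually_elim (simp add: enat)
  next
    case infinity
    define N where "N = nat (\<bar>i$j\<bar> + \<bar>m$j\<bar>)"
    have "eventually (\<lambda>n. ks n $ j \<ge> enat (2 * N + 2)) sequentially"
      using kc[rule_format, of j] infinity by (simp add: enat_conv_def del: of_nat_Suc)
    then show ?thesis
    proof eventually_elim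
      case (elim n)
      have a: "repc (ks n $ j) (i$j) = i$j" by (rule rep_big[OF elim]) (simp add: N_def)
      have b: "repc (ks n $ j) (i$j + m$j) = i$j + m$j" by (rule rep_big[OF elim]) (simp add: N_def)
      show ?case using a b infinity by (simp add: tauc_def repc_def)
    qed
  qed
  then have "eventually (\<lambda>n. \<forall>j. tauc (ks n $ j) (i$j) (m$j) = tauc (k$j) (i$j) (m$j)) sequentially"
    by (rule eventually_all_finite)
  then show ?thesis by eventually_elim (simp add: vec_eq_iff tau_nth)
qed

lemma sigma_per:
  assumes "skew_bichar k \<sigma>" "in_lat k (a - a')" "in_lat k (b - b')"
  shows "\<sigma> a b = \<sigma> a' b'"
  using assms unfolding skew_bichar_def by metis

lemma sigma_norm: "skew_bichar k \<sigma> \<Longrightarrow> cmod (\<sigma> a b) = 1"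
  unfolding skew_bichar_def by blast

lemma pi_formula:
  fixes k :: "enat ^ ('d::finite)"
  assumes k2: "\<forall>j. k$j \<ge> 2" and sb: "skew_bichar k \<sigma>"
    and f: "ell1 f" and yb: "\<And>j. cmod (y j) \<le> B"
  shows "(\<lambda>m. f m * (\<sigma> (tau k i m) m * y (tau k i m))) summable_on UNIV"
    and "pi_rep k (rho k \<sigma> (upsilon k f)) y i = infsum (\<lambda>m. f m * (\<sigma> (tau k i m) m * y (tau k i m))) UNIV"
proof -
  define r where "r = rep k i"
  define p where "p = i - r"
  define x where "x m' = y (rep k m' + p)" for m'
  define L where "L = {l. in_lat k l}"
  define F where "F m = f m * (\<sigma> (tau k i m) m * y (tau k i m))" for m
  have fs: "(\<lambda>m. cmod (f m)) summable_on UNIV" using f by (simp add: ell1_def)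
  have B0: "B \<ge> 0" using yb[of undefined] norm_ge_zero order_trans by blast
  show Fs: "F summable_on UNIV"
  proof (rule abs_summable_summable, rule summable_on_comparison_test[OF summable_on_cmult_left[OF fs, of B]])
    fix m show "cmod (F m) \<le> cmod (f m) * B"
      using yb[of "tau k i m"] sigma_norm[OF sb] by (simp add: F_def norm_mult mult_left_mono)
  qed auto
  have lp: "in_lat k p" by (simp add: p_def r_def lat_rep)
  have key: "f (l + n) * (\<sigma> (r + n) n * x (r + n)) = F (l + n)" if "n \<in> I_set k" "l \<in> L" for n l
  proof -
    have l: "in_lat k l" using that by (simp add: L_def)
    have rr: "rep k (r + (l + n)) = rep k (r + n)"
      by (rule rep_eq_lat) (simp add: l)
    have t: "tau k i (l + n) = rep k (r + n) + p"
      by (simp add: tau_def r_def[symmetric] p_def[symmetric] rr)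
    have "\<sigma> (r + n) n = \<sigma> (tau k i (l + n)) (l + n)"
    proof (rule sigma_per[OF sb])
      show "in_lat k (r + n - tau k i (l + n))"
        using lat_diff[OF lat_rep[of k "r + n"] lp] by (simp add: t algebra_simps)
      show "in_lat k (n - (l + n))" using lat_minus[OF l] by simp
    qed
    moreover have "x (r + n) = y (tau k i (l + n))" by (simp add: x_def t)
    ultimately show ?thesis by (simp add: F_def)
  qed
  have "pi_rep k (rho k \<sigma> (upsilon k f)) y i = rho k \<sigma> (upsilon k f) x r"
    by (simp add: pi_rep_def Let_def r_def p_def x_def[abs_def])
  also have "\<dots> = infsum (\<lambda>n. infsum (\<lambda>l. F (l + n)) L) (I_set k)"
    unfolding rho_def Uop_def
  proof (rule infsum_cong)
    fix n assume n: "n \<in> I_set k"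
    have "upsilon k f n * (\<sigma> (r + n) n * x (r + n)) = infsum (\<lambda>l. f (l + n) * (\<sigma> (r + n) n * x (r + n))) L"
      by (simp add: upsilon_def L_def infsum_cmult_left')
    also have "\<dots> = infsum (\<lambda>l. F (l + n)) L"
      by (rule infsum_cong) (use key n in auto)
    finally show "upsilon k f n * (\<sigma> (r + n) n * x (r + n)) = infsum (\<lambda>l. F (l + n)) L" .
  qed
  also have "\<dots> = infsum (\<lambda>(n, l). F (l + n)) (Sigma (I_set k) (\<lambda>_. L))"
  proof (rule infsum_Sigma'_banach)
    have "F summable_on UNIV \<longleftrightarrow> (\<lambda>(n, l). F (l + n)) summable_on (Sigma (I_set k) (\<lambda>_. L))"
    proof (rule summable_on_reindex_bij_witness[where i = "\<lambda>(n, l). l + n" and j = "\<lambda>m. (rep k m, m - rep k m)"])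
      fix m :: "'d pt"
      show "(rep k m, m - rep k m) \<in> Sigma (I_set k) (\<lambda>_. L)"
        using rep_in_I[OF k2] lat_rep by (auto simp: L_def)
    next
      fix a assume a: "a \<in> Sigma (I_set k) (\<lambda>_. L)"
      then obtain n l where nl: "a = (n, l)" "n \<in> I_set k" "in_lat k l" by (auto simp: L_def)
      have "rep k (l + n) = rep k n" by (rule rep_eq_lat) (simp add: nl)
      then have "rep k (l + n) = n" using I_rep[OF k2 nl(2)] by simp
      then show "(\<lambda>m. (rep k m, m - rep k m)) ((\<lambda>(n, l). l + n) a) = a" by (simp add: nl)
    qed (auto simp: case_prod_unfold)
    then show "(\<lambda>(n, l). F (l + n)) summable_on (Sigma (I_set k) (\<lambda>_. L))" using Fs by simp
  qed
  also have "\<dots> = infsum F UNIV"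
  proof (rule infsum_reindex_bij_witness[where i = "\<lambda>m. (rep k m, m - rep k m)" and j = "\<lambda>(n, l). l + n"])
    fix m :: "'d pt"
    show "(rep k m, m - rep k m) \<in> Sigma (I_set k) (\<lambda>_. L)"
      using rep_in_I[OF k2] lat_rep by (auto simp: L_def)
  next
    fix a assume a: "a \<in> Sigma (I_set k) (\<lambda>_. L)"
    then obtain n l where nl: "a = (n, l)" "n \<in> I_set k" "in_lat k l" by (auto simp: L_def)
    have "rep k (l + n) = rep k n" by (rule rep_eq_lat) (simp add: nl)
    then have "rep k (l + n) = n" using I_rep[OF k2 nl(2)] by simp
    then show "(\<lambda>m. (rep k m, m - rep k m)) ((\<lambda>(n, l). l + n) a) = a" by (simp add: nl)
  qed (auto simp: case_prod_unfold)
  finally show "pi_rep k (rho k \<sigma> (upsilon k f)) y i = infsum (\<lambda>m. f m * (\<sigma> (tau k i m) m * y (tau k i m))) UNIV"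
    by (simp add: F_def[abs_def])
qed



definition Vf :: "enat ^ ('d::finite) \<Rightarrow> ('d pt \<Rightarrow> 'd pt \<Rightarrow> complex) \<Rightarrow> 'd pt \<Rightarrow> ('d pt \<Rightarrow> complex) \<Rightarrow> 'd pt \<Rightarrow> complex" where
  "Vf k \<sigma> m y i = \<sigma> (tau k i m) m * y (tau k i m)"

lemma ell2_bound:
  assumes "ell2 y" shows "cmod (y j) \<le> l2norm y"
proof -
  have "(\<Sum>i\<in>{j}. (cmod (y i))\<^sup>2) \<le> infsum (\<lambda>i. (cmod (y i))\<^sup>2) UNIV"
    by (rule finite_sum_le_infsum) (use assms in \<open>auto simp: ell2_def\<close>)
  then have "sqrt ((cmod (y j))\<^sup>2) \<le> l2norm y" unfolding l2norm_def
    by (intro real_sqrt_le_mono) simp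
  then show ?thesis by simp
qed

lemma l2norm_nonneg: "l2norm y \<ge> 0"
  by (simp add: l2norm_def infsum_nonneg)

lemma V_l2:
  assumes sb: "skew_bichar k \<sigma>" and y: "ell2 y"
  shows "(\<lambda>i. (cmod (Vf k \<sigma> m y i))\<^sup>2) summable_on UNIV"
    and "infsum (\<lambda>i. (cmod (Vf k \<sigma> m y i))\<^sup>2) UNIV = infsum (\<lambda>i. (cmod (y i))\<^sup>2) UNIV"
  using perm_l2[where \<tau> = "\<lambda>i. tau k i m" and \<tau>' = "\<lambda>i. tau k i (-m)" and s = "\<lambda>i. \<sigma> (tau k i m) m" and z = y,
      OF tau_inv tau_inv' sigma_norm[OF sb]] y
  by (auto simp: Vf_def ell2_def)

lemma V_bound:
  assumes sb: "skew_bichar k \<sigma>" and y: "ell2 y"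
  shows "cmod (Vf k \<sigma> m y i) \<le> l2norm y"
  using ell2_bound[OF y] sigma_norm[OF sb] by (simp add: Vf_def norm_mult)

lemma infsum_diff_c:
  fixes a b :: "'a \<Rightarrow> complex"
  assumes "a summable_on A" "b summable_on A"
  shows "infsum (\<lambda>x. a x - b x) A = infsum a A - infsum b A"
proof -
  have "infsum (\<lambda>x. a x + - b x) A = infsum a A + infsum (\<lambda>x. - b x) A"
    by (rule infsum_add) (use assms summable_on_uminus in auto)
  then show ?thesis by (simp add: infsum_uminus)
qed

lemma ell2_diff: "ell2 u \<Longrightarrow> ell2 z \<Longrightarrow> ell2 (\<lambda>i. u i - z i)"
  unfolding ell2_def
proof -
  assume u: "(\<lambda>i. (cmod (u i))\<^sup>2) summable_on UNIV" and z: "(\<lambda>i. (cmod (z i))\<^sup>2) summable_on UNIV"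
  show "(\<lambda>i. (cmod (u i - z i))\<^sup>2) summable_on UNIV"
    by (rule summable_on_comparison_test[OF summable_on_add[OF summable_on_cmult_right[OF u, of 2] summable_on_cmult_right[OF z, of 2]]])
       (auto intro: sq_diff_le)
qed

locale mctx =
  fixes k :: "enat ^ ('d::finite)" and \<sigma> :: "'d pt \<Rightarrow> 'd pt \<Rightarrow> complex"
    and ks :: "nat \<Rightarrow> enat ^ 'd" and \<sigma>s :: "nat \<Rightarrow> 'd pt \<Rightarrow> 'd pt \<Rightarrow> complex"
    and f :: "'d pt \<Rightarrow> complex"
  assumes k2: "\<forall>j. k$j \<ge> 2" and sb: "skew_bichar k \<sigma>"
    and ks2: "\<And>n. \<forall>j. ks n $ j \<ge> 2" and sbn: "\<And>n. skew_bichar (ks n) (\<sigma>s n)"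
    and f: "ell1 f"
begin

definition En :: "nat \<Rightarrow> ('d pt \<Rightarrow> complex) \<Rightarrow> 'd pt \<Rightarrow> complex" where
  "En n y i = infsum (\<lambda>m. f m * (Vf (ks n) (\<sigma>s n) m y i - Vf k \<sigma> m y i)) UNIV"

definition C where "C = infsum (\<lambda>m. cmod (f m)) UNIV"

lemma fs: "(\<lambda>m. cmod (f m)) summable_on UNIV" using f by (simp add: ell1_def)
lemma C0: "C \<ge> 0" by (simp add: C_def infsum_nonneg)

lemma Esum:
  assumes y: "ell2 y"
  shows "(\<lambda>m. f m * (Vf (ks n) (\<sigma>s n) m y i - Vf k \<sigma> m y i)) summable_on UNIV"
proof (rule abs_summable_summable, rule summable_on_comparison_test[OF summable_on_cmult_left[OF fs, of "2 * l2norm y"]])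
  fix m
  have "cmod (Vf (ks n) (\<sigma>s n) m y i - Vf k \<sigma> m y i) \<le> cmod (Vf (ks n) (\<sigma>s n) m y i) + cmod (Vf k \<sigma> m y i)"
    by (rule norm_triangle_ineq4)
  also have "\<dots> \<le> 2 * l2norm y" by (rule order_trans[OF add_mono[OF V_bound[OF sbn y] V_bound[OF sb y]]]) simp
  finally show "norm (f m * (Vf (ks n) (\<sigma>s n) m y i - Vf k \<sigma> m y i)) \<le> cmod (f m) * (2 * l2norm y)"
    by (simp add: norm_mult mult_left_mono)
qed auto

lemma diff_formula:
  assumes y: "ell2 y"
  shows "pi_rep (ks n) (rho (ks n) (\<sigma>s n) (upsilon (ks n) f)) y i - pi_rep k (rho k \<sigma> (upsilon k f)) y i = En n y i"
proof -
  note b = ell2_bound[OF y]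
  have "En n y i = infsum (\<lambda>m. f m * Vf (ks n) (\<sigma>s n) m y i - f m * Vf k \<sigma> m y i) UNIV"
    by (simp add: En_def algebra_simps)
  also have "\<dots> = infsum (\<lambda>m. f m * Vf (ks n) (\<sigma>s n) m y i) UNIV - infsum (\<lambda>m. f m * Vf k \<sigma> m y i) UNIV"
    by (rule infsum_diff_c) (use pi_formula(1)[OF ks2 sbn f b] pi_formula(1)[OF k2 sb f b] in \<open>simp_all add: Vf_def\<close>)
  finally show ?thesis
    using pi_formula(2)[OF ks2 sbn f b] pi_formula(2)[OF k2 sb f b] by (simp add: Vf_def)
qed

lemma row_l2:
  assumes y: "ell2 y"
  shows "(\<lambda>i. (cmod (Vf (ks n) (\<sigma>s n) m y i - Vf k \<sigma> m y i))\<^sup>2) summable_on UNIV"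
    and "infsum (\<lambda>i. (cmod (Vf (ks n) (\<sigma>s n) m y i - Vf k \<sigma> m y i))\<^sup>2) UNIV \<le> 4 * infsum (\<lambda>i. (cmod (y i))\<^sup>2) UNIV"
proof -
  have S: "(\<lambda>i. 2 * (cmod (Vf (ks n) (\<sigma>s n) m y i))\<^sup>2 + 2 * (cmod (Vf k \<sigma> m y i))\<^sup>2) summable_on UNIV"
    by (intro summable_on_add summable_on_cmult_right V_l2(1)[OF sbn y] V_l2(1)[OF sb y])
  show s: "(\<lambda>i. (cmod (Vf (ks n) (\<sigma>s n) m y i - Vf k \<sigma> m y i))\<^sup>2) summable_on UNIV"
    by (rule summable_on_comparison_test[OF S]) (auto intro: sq_diff_le)
  have "infsum (\<lambda>i. (cmod (Vf (ks n) (\<sigma>s n) m y i - Vf k \<sigma> m y i))\<^sup>2) UNIV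
        \<le> infsum (\<lambda>i. 2 * (cmod (Vf (ks n) (\<sigma>s n) m y i))\<^sup>2 + 2 * (cmod (Vf k \<sigma> m y i))\<^sup>2) UNIV"
    by (rule infsum_mono[OF s S]) (rule sq_diff_le)
  also have "\<dots> = 4 * infsum (\<lambda>i. (cmod (y i))\<^sup>2) UNIV"
    by (subst infsum_add) (auto intro!: summable_on_cmult_right V_l2(1)[OF sbn y] V_l2(1)[OF sb y]
        simp: infsum_cmult_right' V_l2(2)[OF sbn y] V_l2(2)[OF sb y])
  finally show "infsum (\<lambda>i. (cmod (Vf (ks n) (\<sigma>s n) m y i - Vf k \<sigma> m y i))\<^sup>2) UNIV \<le> 4 * infsum (\<lambda>i. (cmod (y i))\<^sup>2) UNIV" .
qed

lemma E_basic:
  assumes y: "ell2 y"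
  shows "(\<lambda>i. (cmod (En n y i))\<^sup>2) summable_on UNIV"
    and "infsum (\<lambda>i. (cmod (En n y i))\<^sup>2) UNIV
         \<le> C * infsum (\<lambda>m. cmod (f m) * infsum (\<lambda>i. (cmod (Vf (ks n) (\<sigma>s n) m y i - Vf k \<sigma> m y i))\<^sup>2) UNIV) UNIV"
proof -
  have bnd: "cmod (Vf (ks n) (\<sigma>s n) m y i - Vf k \<sigma> m y i) \<le> 2 * l2norm y" for m i
  proof -
    have "cmod (Vf (ks n) (\<sigma>s n) m y i - Vf k \<sigma> m y i) \<le> cmod (Vf (ks n) (\<sigma>s n) m y i) + cmod (Vf k \<sigma> m y i)"
      by (rule norm_triangle_ineq4)
    also have "\<dots> \<le> 2 * l2norm y" by (rule order_trans[OF add_mono[OF V_bound[OF sbn y] V_bound[OF sb y]]]) simp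
    finally show ?thesis .
  qed
  note sb2 = sum_norm_bound[where f = f and y = "\<lambda>m i. Vf (ks n) (\<sigma>s n) m y i - Vf k \<sigma> m y i",
      OF fs bnd row_l2(1)[OF y] row_l2(2)[OF y]]
  show "(\<lambda>i. (cmod (En n y i))\<^sup>2) summable_on UNIV" using sb2(1) by (simp add: En_def[abs_def])
  show "infsum (\<lambda>i. (cmod (En n y i))\<^sup>2) UNIV
         \<le> C * infsum (\<lambda>m. cmod (f m) * infsum (\<lambda>i. (cmod (Vf (ks n) (\<sigma>s n) m y i - Vf k \<sigma> m y i))\<^sup>2) UNIV) UNIV"
    using sb2(2) by (simp add: En_def[abs_def] C_def)
qed

lemma E_bound:
  assumes y: "ell2 y"
  shows "infsum (\<lambda>i. (cmod (En n y i))\<^sup>2) UNIV \<le> C * (C * (4 * infsum (\<lambda>i. (cmod (y i))\<^sup>2) UNIV))"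
proof -
  define Y where "Y = infsum (\<lambda>i. (cmod (y i))\<^sup>2) UNIV"
  define N where "N m = infsum (\<lambda>i. (cmod (Vf (ks n) (\<sigma>s n) m y i - Vf k \<sigma> m y i))\<^sup>2) UNIV" for m
  have N0: "N m \<ge> 0" for m by (simp add: N_def infsum_nonneg)
  have NY: "N m \<le> 4 * Y" for m using row_l2(2)[OF y] by (simp add: N_def Y_def)
  have S: "(\<lambda>m. cmod (f m) * (4 * Y)) summable_on UNIV" by (intro summable_on_cmult_left fs)
  have S': "(\<lambda>m. cmod (f m) * N m) summable_on UNIV"
    by (rule summable_on_comparison_test[OF S]) (auto intro: mult_left_mono NY N0 mult_nonneg_nonneg)
  have "infsum (\<lambda>m. cmod (f m) * N m) UNIV \<le> infsum (\<lambda>m. cmod (f m) * (4 * Y)) UNIV"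
    by (rule infsum_mono[OF S' S]) (auto intro: mult_left_mono NY)
  also have "\<dots> = C * (4 * Y)" by (simp add: infsum_cmult_left' C_def)
  finally have "C * infsum (\<lambda>m. cmod (f m) * N m) UNIV \<le> C * (C * (4 * Y))"
    using C0 by (intro mult_left_mono) auto
  then show ?thesis using E_basic(2)[OF y, of n] unfolding N_def[abs_def] Y_def by linarith
qed

lemma E_add:
  assumes u: "ell2 u" and z: "ell2 z"
  shows "En n (\<lambda>i. u i + z i) i = En n u i + En n z i"
proof -
  have "En n (\<lambda>i. u i + z i) i = infsum (\<lambda>m. f m * (Vf (ks n) (\<sigma>s n) m u i - Vf k \<sigma> m u i)
        + f m * (Vf (ks n) (\<sigma>s n) m z i - Vf k \<sigma> m z i)) UNIV"
    by (simp add: En_def Vf_def algebra_simps)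
  also have "\<dots> = En n u i + En n z i"
    by (subst infsum_add) (auto intro: Esum u z simp: En_def)
  finally show ?thesis .
qed

end



context mctx begin

lemma E_strong:
  assumes kc: "\<forall>j. enat_conv (\<lambda>n. ks n $ j) (k $ j)"
    and sc: "\<forall>a b. (\<lambda>n. \<sigma>s n a b) \<longlonglongrightarrow> \<sigma> a b"
    and z: "ell2 z"
  shows "(\<lambda>n. infsum (\<lambda>i. (cmod (En n z i))\<^sup>2) UNIV) \<longlonglongrightarrow> 0"
proof -
  define N where "N n m = infsum (\<lambda>i. (cmod (Vf (ks n) (\<sigma>s n) m z i - Vf k \<sigma> m z i))\<^sup>2) UNIV" for n m
  define Z where "Z = infsum (\<lambda>i. (cmod (z i))\<^sup>2) UNIV"
  have zs: "(\<lambda>j. (cmod (z j))\<^sup>2) summable_on UNIV" using z by (simp add: ell2_def)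
  have Nlim: "(\<lambda>n. N n m) \<longlonglongrightarrow> 0" for m
  proof -
    have sl: "(\<lambda>n. \<sigma>s n (tau (ks n) i m) m) \<longlonglongrightarrow> \<sigma> (tau k i m) m" for i
    proof -
      have l: "(\<lambda>n. \<sigma>s n (tau k i m) m) \<longlonglongrightarrow> \<sigma> (tau k i m) m" using sc by blast
      have "eventually (\<lambda>n. \<sigma>s n (tau k i m) m = \<sigma>s n (tau (ks n) i m) m) sequentially"
        using tau_conv[OF kc, of i m] by eventually_elim simp
      then show ?thesis using l by (rule Lim_transform_eventually[rotated])
    qed
    show ?thesis
      using strong_perm[where z = z and \<tau>n = "\<lambda>n i. tau (ks n) i m" and \<tau>n' = "\<lambda>n i. tau (ks n) i (-m)"
          and \<tau> = "\<lambda>i. tau k i m" and \<tau>' = "\<lambda>i. tau k i (-m)" and sn = "\<lambda>n i. \<sigma>s n (tau (ks n) i m) m"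
          and s = "\<lambda>i. \<sigma> (tau k i m) m",
          OF tau_inv tau_inv' tau_inv tau_inv' sigma_norm[OF sb] sigma_norm[OF sbn] tau_conv[OF kc] tau_conv[OF kc] sl zs]
      by (simp add: N_def Vf_def)
  qed
  have N0: "N n m \<ge> 0" for n m by (simp add: N_def infsum_nonneg)
  have NZ: "N n m \<le> 4 * Z" for n m using row_l2(2)[OF z] by (simp add: N_def Z_def)
  have "(\<lambda>n. infsum (\<lambda>m. cmod (f m) * N n m) UNIV) \<longlonglongrightarrow> 0"
    by (rule dom_conv[OF _ fs N0 NZ Nlim]) simp
  then have up: "(\<lambda>n. C * infsum (\<lambda>m. cmod (f m) * N n m) UNIV) \<longlonglongrightarrow> C * 0"
    by (intro tendsto_intros)
  show ?thesis
  proof (rule tendsto_sandwich[OF _ _ tendsto_const])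
    show "\<forall>\<^sub>F n in sequentially. 0 \<le> infsum (\<lambda>i. (cmod (En n z i))\<^sup>2) UNIV"
      by (simp add: infsum_nonneg)
    show "\<forall>\<^sub>F n in sequentially. infsum (\<lambda>i. (cmod (En n z i))\<^sup>2) UNIV \<le> C * infsum (\<lambda>m. cmod (f m) * N n m) UNIV"
      using E_basic(2)[OF z] by (simp add: N_def[abs_def])
    show "(\<lambda>n. C * infsum (\<lambda>m. cmod (f m) * N n m) UNIV) \<longlonglongrightarrow> 0" using up by simp
  qed
qed

end

theorem mainTheorem6:
  fixes k :: "enat ^ 'd" and \<sigma> :: "int ^ 'd \<Rightarrow> int ^ 'd \<Rightarrow> complex"
    and T :: "(int ^ 'd \<Rightarrow> complex) \<Rightarrow> (int ^ 'd \<Rightarrow> complex)"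
    and ks :: "nat \<Rightarrow> enat ^ 'd" and \<sigma>s :: "nat \<Rightarrow> int ^ 'd \<Rightarrow> int ^ 'd \<Rightarrow> complex"
    and f :: "int ^ 'd \<Rightarrow> complex"
  assumes "CARD('d) \<ge> 2"
    and "in_Xi k \<sigma>"
    and "compact_op T"
    and "\<forall>n. in_Xi (ks n) (\<sigma>s n)"
    and "Xi_conv ks \<sigma>s k \<sigma>"
    and "ell1 f"
  shows "(\<lambda>n. opnorm (\<lambda>x i. pi_rep (ks n) (rho (ks n) (\<sigma>s n) (upsilon (ks n) f)) (T x) i
                         - pi_rep k (rho k \<sigma> (upsilon k f)) (T x) i)) \<longlonglongrightarrow> 0"
proof -
  have k2: "\<forall>j. k$j \<ge> 2" and sb: "skew_bichar k \<sigma>" using assms(2) by (auto simp: in_Xi_def)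
  have ks2: "\<And>n. \<forall>j. ks n $ j \<ge> 2" and sbn: "\<And>n. skew_bichar (ks n) (\<sigma>s n)"
    using assms(4) by (auto simp: in_Xi_def)
  have kc: "\<forall>j. enat_conv (\<lambda>n. ks n $ j) (k $ j)" and sc: "\<forall>a b. (\<lambda>n. \<sigma>s n a b) \<longlonglongrightarrow> \<sigma> a b"
    using assms(5) by (auto simp: Xi_conv_def)
  interpret mctx k \<sigma> ks \<sigma>s f
    by (unfold_locales) (use k2 sb ks2 sbn assms(6) in auto)
  have Tl2: "\<And>x. ell2 x \<Longrightarrow> ell2 (T x)" and
    net: "\<And>e. e > 0 \<Longrightarrow> \<exists>F. finite F \<and> (\<forall>z\<in>F. ell2 z) \<and>
        (\<forall>x. ell2 x \<and> l2norm x \<le> 1 \<longrightarrow> (\<exists>z\<in>F. l2norm (\<lambda>i. T x i - z i) < e))"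
    using assms(3) unfolding compact_op_def by blast+
  define G where "G n x = (\<lambda>i. pi_rep (ks n) (rho (ks n) (\<sigma>s n) (upsilon (ks n) f)) (T x) i
                         - pi_rep k (rho k \<sigma> (upsilon k f)) (T x) i)" for n x
  have G: "G n x = En n (T x)" if "ell2 x" for n x
    using diff_formula[OF Tl2[OF that]] by (auto simp: G_def)
  show ?thesis
  proof (rule LIMSEQ_I)
    fix r :: real assume r: "r > 0"
    define e where "e = r / (8 * (C + 1))"
    have e0: "e > 0" using r C0 by (simp add: e_def)
    obtain F where F: "finite F" "\<forall>z\<in>F. ell2 z"
      "\<forall>x. ell2 x \<and> l2norm x \<le> 1 \<longrightarrow> (\<exists>z\<in>F. l2norm (\<lambda>i. T x i - z i) < e)"
      using net[OF e0] by blast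
    have "eventually (\<lambda>n. \<forall>z\<in>F. infsum (\<lambda>i. (cmod (En n z i))\<^sup>2) UNIV < r\<^sup>2 / 16) sequentially"
    proof (rule eventually_ball_finite[OF F(1)], intro ballI)
      fix z assume "z \<in> F"
      then have z: "ell2 z" using F by auto
      show "eventually (\<lambda>n. infsum (\<lambda>i. (cmod (En n z i))\<^sup>2) UNIV < r\<^sup>2 / 16) sequentially"
        by (rule order_tendstoD(2)[OF E_strong[OF kc sc z]]) (use r in simp)
    qed
    then obtain N where N: "\<And>n z. n \<ge> N \<Longrightarrow> z \<in> F \<Longrightarrow> infsum (\<lambda>i. (cmod (En n z i))\<^sup>2) UNIV < r\<^sup>2 / 16"
      by (auto simp: eventually_sequentially)
    show "\<exists>N. \<forall>n\<ge>N. norm (opnorm (\<lambda>x i. pi_rep (ks n) (rho (ks n) (\<sigma>s n) (upsilon (ks n) f)) (T x) i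
                         - pi_rep k (rho k \<sigma> (upsilon k f)) (T x) i) - 0) < r"
    proof (intro exI allI impI)
      fix n assume n: "n \<ge> N"
      have pt: "l2norm (G n x) \<le> r / 2" if x: "ell2 x" "l2norm x \<le> 1" for x
      proof -
        obtain z where z: "z \<in> F" "l2norm (\<lambda>i. T x i - z i) < e" using F(3) x by blast
        have zl: "ell2 z" using F(2) z(1) by auto
        define u where "u = (\<lambda>i. T x i - z i)"
        have ul: "ell2 u" unfolding u_def by (rule ell2_diff[OF Tl2[OF x(1)] zl])
        define U where "U = infsum (\<lambda>i. (cmod (u i))\<^sup>2) UNIV"
        have U0: "U \<ge> 0" by (simp add: U_def infsum_nonneg)
        have "sqrt U < e" using z(2) by (simp add: U_def u_def l2norm_def)
        then have Ue: "U < e\<^sup>2" using U0 by (metis real_sqrt_less_iff real_sqrt_pow2 real_sqrt_unique e0 less_eq_real_def)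
        have Tx: "T x = (\<lambda>i. u i + z i)" by (simp add: u_def)
        have Eadd: "En n (T x) i = En n u i + En n z i" for i
          unfolding Tx by (rule E_add[OF ul zl])
        have pw: "(cmod (En n (T x) i))\<^sup>2 \<le> 2 * (cmod (En n u i))\<^sup>2 + 2 * (cmod (En n z i))\<^sup>2" for i
          using sq_diff_le[of "En n u i" "- En n z i"] by (simp add: Eadd)
        have S2: "(\<lambda>i. 2 * (cmod (En n u i))\<^sup>2 + 2 * (cmod (En n z i))\<^sup>2) summable_on UNIV"
          by (intro summable_on_add summable_on_cmult_right E_basic(1) ul zl)
        have "infsum (\<lambda>i. (cmod (En n (T x) i))\<^sup>2) UNIV \<le> infsum (\<lambda>i. 2 * (cmod (En n u i))\<^sup>2 + 2 * (cmod (En n z i))\<^sup>2) UNIV"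
          by (rule infsum_mono[OF E_basic(1)[OF Tl2[OF x(1)]] S2 pw])
        also have "\<dots> = 2 * infsum (\<lambda>i. (cmod (En n u i))\<^sup>2) UNIV + 2 * infsum (\<lambda>i. (cmod (En n z i))\<^sup>2) UNIV"
          by (subst infsum_add) (auto intro!: summable_on_cmult_right E_basic(1) ul zl simp: infsum_cmult_right')
        also have "\<dots> \<le> 2 * (C * (C * (4 * U))) + 2 * (r\<^sup>2 / 16)"
          using E_bound[OF ul, of n] N[OF n z(1)] unfolding U_def by linarith
        also have "\<dots> \<le> r\<^sup>2 / 4"
        proof -
          have "C * C * U \<le> C * C * e\<^sup>2" using Ue C0 by (intro mult_left_mono) auto
          also have "\<dots> = r\<^sup>2 * (C / (C + 1))\<^sup>2 / 64" unfolding e_def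
            by (simp add: power2_eq_square field_simps)
          also have "\<dots> \<le> r\<^sup>2 / 64"
          proof -
            have "C / (C + 1) \<le> 1" using C0 by simp
            then have "(C / (C + 1))\<^sup>2 \<le> 1" using C0 by (simp add: power_le_one)
            then show ?thesis by (simp add: mult_left_le)
          qed
          finally have "C * C * U \<le> r\<^sup>2 / 64" .
          then show ?thesis by (simp add: algebra_simps)
        qed
        finally have "infsum (\<lambda>i. (cmod (En n (T x) i))\<^sup>2) UNIV \<le> r\<^sup>2 / 4" .
        then have "l2norm (En n (T x)) \<le> sqrt (r\<^sup>2 / 4)" unfolding l2norm_def by (rule real_sqrt_le_mono)
        also have "sqrt (r\<^sup>2 / 4) = r / 2" using r by (simp add: real_sqrt_divide)
        finally show ?thesis using G[OF x(1)] by simp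
      qed
      define SS where "SS = {l2norm (G n x) | x. ell2 x \<and> l2norm x \<le> 1}"
      have z0: "ell2 (\<lambda>_. 0)" "l2norm (\<lambda>_. 0) \<le> 1" by (auto simp: ell2_def l2norm_def)
      have ne: "SS \<noteq> {}" using z0 by (auto simp: SS_def)
      have ub: "\<forall>s\<in>SS. s \<le> r / 2" using pt by (auto simp: SS_def)
      have "Sup SS \<le> r / 2" by (rule cSup_least[OF ne]) (use ub in auto)
      moreover have "l2norm (G n (\<lambda>_. 0)) \<le> Sup SS"
      proof (rule cSup_upper)
        show "bdd_above SS" unfolding bdd_above_def using ub by blast
        show "l2norm (G n (\<lambda>_. 0)) \<in> SS" using z0 unfolding SS_def by blast
      qed
      moreover have "l2norm (G n (\<lambda>_. 0)) \<ge> 0" by (rule l2norm_nonneg)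
      moreover have "opnorm (\<lambda>x i. pi_rep (ks n) (rho (ks n) (\<sigma>s n) (upsilon (ks n) f)) (T x) i
                         - pi_rep k (rho k \<sigma> (upsilon k f)) (T x) i) = Sup SS"
        by (simp add: opnorm_def SS_def G_def)
      ultimately show "norm (opnorm (\<lambda>x i. pi_rep (ks n) (rho (ks n) (\<sigma>s n) (upsilon (ks n) f)) (T x) i
                         - pi_rep k (rho k \<sigma> (upsilon k f)) (T x) i) - 0) < r" using r by auto
    qed
  qed
qed

end
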